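(* Let $G=(V,E)$ be a planar graph embedded in the plane, with $n$ vertices, that has a perfect matching, has no vertex of degree $1$, and in which no two vertices of degree $2$ are adjacent. Then $G$ has at least $\frac{n}{4}+2$ faces.
   Context: Faces of an embedded planar graph are the closures of the maximal open connected subsets of the plane minus the embedding. *)

theory Defs
  imports "HOL-Analysis.Analysis"
begin

definition simple_graph :: "'a set \<Rightarrow> 'a set set \<Rightarrow> bool" where
  "simple_graph V E \<longleftrightarrow> finite V \<and>
     (\<forall>e\<in>E. \<exists>u v. u \<noteq> v \<and> e = {u, v} \<and> u \<in> V \<and> v \<in> V)"

definition degree :: "'a set set \<Rightarrow> 'a \<Rightarrow> nat" where
  "degree E v = card {e\<in>E. v \<in> e}"

definition adjacent :: "'a set set \<Rightarrow> 'a \<Rightarrow> 'a \<Rightarrow> bool" where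
  "adjacent E u v \<longleftrightarrow> {u, v} \<in> E"

definition perfect_matching :: "'a set \<Rightarrow> 'a set set \<Rightarrow> 'a set set \<Rightarrow> bool" where
  "perfect_matching V E M \<longleftrightarrow> M \<subseteq> E \<and> (\<forall>v\<in>V. \<exists>!e. e \<in> M \<and> v \<in> e)"

definition plane_embedding ::
  "'a set \<Rightarrow> 'a set set \<Rightarrow> ('a \<Rightarrow> complex) \<Rightarrow> ('a set \<Rightarrow> real \<Rightarrow> complex) \<Rightarrow> bool" where
  "plane_embedding V E pos \<gamma> \<longleftrightarrow>
     inj_on pos V \<and>
     (\<forall>e\<in>E. arc (\<gamma> e) \<and> {pathstart (\<gamma> e), pathfinish (\<gamma> e)} = pos ` e \<and>
             path_image (\<gamma> e) \<inter> pos ` V = pos ` e) \<and>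
     (\<forall>e\<in>E. \<forall>e'\<in>E. e \<noteq> e' \<longrightarrow>
             path_image (\<gamma> e) \<inter> path_image (\<gamma> e') \<subseteq> pos ` (e \<inter> e'))"

definition embedding_set ::
  "'a set \<Rightarrow> 'a set set \<Rightarrow> ('a \<Rightarrow> complex) \<Rightarrow> ('a set \<Rightarrow> real \<Rightarrow> complex) \<Rightarrow> complex set" where
  "embedding_set V E pos \<gamma> = pos ` V \<union> (\<Union>e\<in>E. path_image (\<gamma> e))"

definition faces ::
  "'a set \<Rightarrow> 'a set set \<Rightarrow> ('a \<Rightarrow> complex) \<Rightarrow> ('a set \<Rightarrow> real \<Rightarrow> complex) \<Rightarrow> complex set set" where
  "faces V E pos \<gamma> = closure ` components (- embedding_set V E pos \<gamma>)"

end

theory Submission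
  imports Defs
begin


lemma arc_image_interior_empty:
  fixes g :: "real \<Rightarrow> complex"
  assumes "arc g"
  shows "interior (path_image g) = {}"
proof (rule ccontr)
  assume ne: "interior (path_image g) \<noteq> {}"
  have "path_image g homeomorphic {0..1::real}"
    using homeomorphic_arc_image_interval[OF assms, of 0 1] by simp
  then obtain h k where hk: "homeomorphism (path_image g) {0..1::real} h k"
    by (auto simp: homeomorphic_def)
  have "continuous_on (interior (path_image g)) h"
    using hk interior_subset by (meson continuous_on_subset homeomorphism_cont1)
  moreover have "inj_on h (interior (path_image g))"
  proof (rule inj_onI)
    fix x y assume "x \<in> interior (path_image g)" "y \<in> interior (path_image g)" "h x = h y"
    then show "x = y" using homeomorphism_apply1[OF hk] interior_subset by (metis subsetD)
  qed
  ultimately have "DIM(complex) \<le> DIM(real)"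
    using invariance_of_dimension[of "interior (path_image g)" h] ne by auto
  then show False by simp
qed

lemma comp_in: "D \<in> components S \<Longrightarrow> x \<in> D \<Longrightarrow> D = connected_component_set S x"
  by (metis componentsE connected_component_eq)

lemma fiber_count:
  fixes \<phi> :: "'a \<Rightarrow> 'b" and \<psi> :: "'a \<Rightarrow> bool"
  assumes finY: "finite Y" and into: "\<And>D. D \<in> X \<Longrightarrow> \<phi> D \<in> Y"
    and onto: "\<And>C. C \<in> Y \<Longrightarrow> \<exists>D\<in>X. \<phi> D = C"
    and fib: "\<And>D D'. D \<in> X \<Longrightarrow> D' \<in> X \<Longrightarrow> \<phi> D = \<phi> D' \<Longrightarrow> \<psi> D = \<psi> D' \<Longrightarrow> D = D'"
  shows "finite X" "card Y \<le> card X"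
    "(\<exists>D\<in>X. \<exists>D'\<in>X. D \<noteq> D' \<and> \<phi> D = \<phi> D') \<Longrightarrow> card Y < card X"
proof -
  have inj: "inj_on (\<lambda>D. (\<phi> D, \<psi> D)) X" using fib by (auto simp: inj_on_def)
  have "(\<lambda>D. (\<phi> D, \<psi> D)) ` X \<subseteq> Y \<times> UNIV" using into by auto
  moreover have "finite (Y \<times> (UNIV::bool set))" using finY by simp
  ultimately have "finite ((\<lambda>D. (\<phi> D, \<psi> D)) ` X)" by (rule finite_subset)
  then show fX: "finite X" using inj finite_imageD by blast
  have Y: "Y = \<phi> ` X" using into onto by blast
  then show "card Y \<le> card X" using card_image_le fX by blast
  assume "\<exists>D\<in>X. \<exists>D'\<in>X. D \<noteq> D' \<and> \<phi> D = \<phi> D'"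
  then have "\<not> inj_on \<phi> X" by (auto simp: inj_on_def)
  then have "card (\<phi> ` X) \<noteq> card X" using fX inj_on_iff_eq_card by blast
  then show "card Y < card X" using Y card_image_le fX by (metis le_neq_implies_less)
qed

lemma step_count:
  fixes K :: "complex set" and A :: "complex set" and Q :: "complex \<Rightarrow> bool"
  assumes K: "closed K" and Aint: "interior A = {}"
    and fin: "finite (components (- K))"
    and sep: "\<And>x y. x \<notin> K \<union> A \<Longrightarrow> y \<notin> K \<union> A \<Longrightarrow> connected_component (- K) x y \<Longrightarrow> Q x = Q y \<Longrightarrow> connected_component (- (K \<union> A)) x y"
  shows "finite (components (- (K \<union> A)))" "card (components (- K)) \<le> card (components (- (K \<union> A)))"
    "(\<exists>x y. x \<notin> K \<union> A \<and> y \<notin> K \<union> A \<and> connected_component (- K) x y \<and> \<not> connected_component (- (K \<union> A)) x y) \<Longrightarrow> card (components (- K)) < card (components (- (K \<union> A)))"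
proof -
  let ?X = "components (- (K \<union> A))" and ?Y = "components (- K)"
  define \<phi> where "\<phi> D = connected_component_set (- K) (SOME x. x \<in> D)" for D
  define \<psi> where "\<psi> D = Q (SOME x. x \<in> D)" for D
  have sm: "(SOME x. x \<in> D) \<in> D" if "D \<in> ?X" for D
    using in_components_nonempty[OF that] by (simp add: some_in_eq)
  have phix: "\<phi> D = connected_component_set (- K) x" if "D \<in> ?X" "x \<in> D" for D x
  proof -
    have "D = connected_component_set (- (K \<union> A)) x" by (rule comp_in[OF that])
    then have "connected_component (- (K \<union> A)) x (SOME x. x \<in> D)"
      using sm[OF that(1)] by simp
    then have "connected_component (- K) x (SOME x. x \<in> D)"
      by (rule connected_component_of_subset) auto
    then have "connected_component_set (- K) (SOME x. x \<in> D) = connected_component_set (- K) x"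
      by (intro connected_component_eq) simp
    then show ?thesis unfolding \<phi>_def by simp
  qed
  have memX: "x \<notin> K \<union> A" if "D \<in> ?X" "x \<in> D" for D x
    using in_components_subset[OF that(1)] that(2) by auto
  have into: "\<phi> D \<in> ?Y" if "D \<in> ?X" for D
  proof -
    have "(SOME x. x \<in> D) \<in> - K" using memX[OF that sm[OF that]] by simp
    then show ?thesis using phix[OF that sm[OF that]] by (simp add: componentsI)
  qed
  have onto: "\<exists>D\<in>?X. \<phi> D = C" if C: "C \<in> ?Y" for C
  proof -
    have oC: "open C" using open_components[OF _ C] K by auto
    have neC: "C \<noteq> {}" using in_components_nonempty[OF C] .
    have "\<not> C \<subseteq> A"
    proof
      assume "C \<subseteq> A"
      then have "C \<subseteq> interior A" using oC by (rule interior_maximal)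
      then show False using Aint neC by simp
    qed
    then obtain z where z: "z \<in> C" "z \<notin> A" by auto
    have zK: "z \<notin> K" using in_components_subset[OF C] z(1) by auto
    let ?D = "connected_component_set (- (K \<union> A)) z"
    have D: "?D \<in> ?X" using zK z by (intro componentsI) auto
    have zD: "z \<in> ?D" using zK z by simp
    have "\<phi> ?D = connected_component_set (- K) z" by (rule phix[OF D zD])
    also have "\<dots> = C" using comp_in[OF C z(1)] by simp
    finally show ?thesis using D by auto
  qed
  have fib: "D = D'" if "D \<in> ?X" "D' \<in> ?X" "\<phi> D = \<phi> D'" "\<psi> D = \<psi> D'" for D D'
  proof -
    let ?x = "SOME x. x \<in> D" and ?y = "SOME x. x \<in> D'"
    have x1: "?x \<in> D" by (rule sm[OF that(1)])
    have x2: "?x \<notin> K \<union> A" by (rule memX[OF that(1) x1])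
    have y1: "?y \<in> D'" by (rule sm[OF that(2)])
    have y2: "?y \<notin> K \<union> A" by (rule memX[OF that(2) y1])
    have "?y \<in> connected_component_set (- K) ?y" using y2 by simp
    then have "?y \<in> connected_component_set (- K) ?x" using that(3) unfolding \<phi>_def by simp
    then have "connected_component (- K) ?x ?y" by simp
    moreover have "Q ?x = Q ?y" using that(4) unfolding \<psi>_def by simp
    ultimately have cc: "connected_component (- (K \<union> A)) ?x ?y"
      using sep x2 y2 by simp
    have "D = connected_component_set (- (K \<union> A)) ?x" by (rule comp_in[OF that(1) x1])
    also have "\<dots> = connected_component_set (- (K \<union> A)) ?y"
      using connected_component_eq[of ?y "- (K \<union> A)" ?x] cc by simp
    also have "\<dots> = D'" using comp_in[OF that(2) y1] by simp
    finally show ?thesis .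
  qed
  show "finite ?X" by (rule fiber_count(1)[of ?Y ?X \<phi> \<psi>, OF fin into onto fib])
  show "card ?Y \<le> card ?X" by (rule fiber_count(2)[of ?Y ?X \<phi> \<psi>, OF fin into onto fib])
  assume "\<exists>x y. x \<notin> K \<union> A \<and> y \<notin> K \<union> A \<and> connected_component (- K) x y \<and> \<not> connected_component (- (K \<union> A)) x y"
  then obtain x y where xy: "x \<notin> K \<union> A" "y \<notin> K \<union> A" "connected_component (- K) x y" "\<not> connected_component (- (K \<union> A)) x y"
    by auto
  let ?Dx = "connected_component_set (- (K \<union> A)) x" and ?Dy = "connected_component_set (- (K \<union> A)) y"
  have Dx: "?Dx \<in> ?X" "x \<in> ?Dx" using xy(1) by (simp_all add: componentsI)
  have Dy: "?Dy \<in> ?X" "y \<in> ?Dy" using xy(2) by (simp_all add: componentsI)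
  have "?Dx \<noteq> ?Dy"
  proof
    assume "?Dx = ?Dy"
    then have "y \<in> ?Dx" using Dy(2) by simp
    then show False using xy(4) by simp
  qed
  moreover have "\<phi> ?Dx = \<phi> ?Dy"
  proof -
    have e1: "connected_component_set (- K) y = connected_component_set (- K) x"
      by (rule connected_component_eq) (simp add: xy(3))
    show ?thesis using phix[OF Dx] phix[OF Dy] e1 by simp
  qed
  ultimately have ex: "\<exists>D\<in>?X. \<exists>D'\<in>?X. D \<noteq> D' \<and> \<phi> D = \<phi> D'"
    using Dx(1) Dy(1) by (intro bexI[of _ ?Dx] bexI[of _ ?Dy] conjI)
  show "card ?Y < card ?X"
    by (rule fiber_count(3)[of ?Y ?X \<phi> \<psi>, OF fin into onto fib ex])
qed



lemma conn_sub_sing: "S \<subseteq> {a} \<Longrightarrow> connected S"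
  by (metis connected_empty connected_sing subset_singletonD)

lemma sep_noncycle:
  fixes K1 K2 :: "complex set" and g :: "real \<Rightarrow> complex"
  assumes K1: "compact K1" and K2: "closed K2" and d: "K1 \<inter> K2 = {}" and g: "arc g"
    and AK: "path_image g \<inter> (K1 \<union> K2) \<subseteq> {pathstart g, pathfinish g}"
    and b1: "pathfinish g \<notin> K1" and a2: "pathstart g \<notin> K2"
    and x: "x \<notin> (K1 \<union> K2) \<union> path_image g" and y: "y \<notin> (K1 \<union> K2) \<union> path_image g"
    and cc: "connected_component (- (K1 \<union> K2)) x y"
  shows "connected_component (- ((K1 \<union> K2) \<union> path_image g)) x y"
proof -
  let ?A = "path_image g"
  have cA: "compact ?A" using g arc_imp_path compact_path_image by blast
  have "connected (- ?A)" using g by (intro connected_arc_complement) auto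
  then have ccA: "connected_component (- ?A) x y"
    using x y unfolding connected_component_def by (intro exI[of _ "- ?A"]) auto
  have cc1: "connected_component (- K1) x y"
    using cc by (rule connected_component_of_subset) auto
  have "?A \<inter> K1 \<subseteq> {pathstart g}" using AK b1 by auto
  then have "connected (?A \<inter> K1)" by (rule conn_sub_sing)
  then have s1: "connected_component (- (?A \<union> K1)) x y"
    using Janiszewski[OF cA compact_imp_closed[OF K1] _ ccA cc1] by simp
  have cc2: "connected_component (- K2) x y"
    using cc by (rule connected_component_of_subset) auto
  have "(?A \<union> K1) \<inter> K2 \<subseteq> {pathfinish g}" using AK a2 d by auto
  then have "connected ((?A \<union> K1) \<inter> K2)" by (rule conn_sub_sing)
  then have "connected_component (- ((?A \<union> K1) \<union> K2)) x y"
    using Janiszewski[OF compact_Un[OF cA K1] K2 _ s1 cc2] by simp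
  moreover have "(?A \<union> K1) \<union> K2 = (K1 \<union> K2) \<union> ?A" by auto
  ultimately show ?thesis by simp
qed

lemma sep_cycle:
  fixes K :: "complex set" and g q :: "real \<Rightarrow> complex"
  assumes K: "closed K" and g: "arc g" and q: "arc q" and qK: "path_image q \<subseteq> K"
    and qs: "pathstart q = pathstart g" and qf: "pathfinish q = pathfinish g"
    and AK: "path_image g \<inter> K \<subseteq> {pathstart g, pathfinish g}"
  shows "\<And>x y. x \<notin> K \<union> path_image g \<Longrightarrow> y \<notin> K \<union> path_image g \<Longrightarrow> connected_component (- K) x y
           \<Longrightarrow> (x \<in> inside (path_image (g +++ reversepath q))) = (y \<in> inside (path_image (g +++ reversepath q)))
           \<Longrightarrow> connected_component (- (K \<union> path_image g)) x y"
    and "\<exists>x y. x \<notin> K \<union> path_image g \<and> y \<notin> K \<union> path_image g \<and> connected_component (- K) x y \<and>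
           \<not> connected_component (- (K \<union> path_image g)) x y"
proof -
  let ?A = "path_image g" and ?c = "g +++ reversepath q"
  let ?J = "path_image ?c"
  have J: "?J = ?A \<union> path_image q"
    by (simp add: path_image_join qf)
  have sp: "simple_path ?c"
  proof (rule simple_path_join_loop)
    show "arc g" by fact
    show "arc (reversepath q)" using q by (simp add: arc_reversepath)
    show "pathfinish g = pathstart (reversepath q)" using qf by simp
    show "pathfinish (reversepath q) = pathstart g" using qs by simp
    show "path_image g \<inter> path_image (reversepath q) \<subseteq> {pathstart g, pathstart (reversepath q)}"
      using AK qK qf by auto
  qed
  have cl: "pathfinish ?c = pathstart ?c" using qs by simp
  note JO = Jordan_inside_outside[OF sp cl]
  have cJ: "compact ?J" using sp simple_path_imp_path compact_path_image by blast
  have JK: "?J \<inter> K = path_image q"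
  proof
    have "pathstart g \<in> path_image q" "pathfinish g \<in> path_image q"
      using qs qf pathstart_in_path_image[of q] pathfinish_in_path_image[of q] by auto
    then show "?J \<inter> K \<subseteq> path_image q" using J AK by auto
    show "path_image q \<subseteq> ?J \<inter> K" using J qK by auto
  qed
  have cq: "connected (path_image q)" using q arc_imp_path connected_path_image by blast
  have JKU: "?J \<union> K = K \<union> ?A" using J qK by auto
  show "connected_component (- (K \<union> ?A)) x y"
    if x: "x \<notin> K \<union> ?A" and y: "y \<notin> K \<union> ?A" and cc: "connected_component (- K) x y"
      and io: "(x \<in> inside ?J) = (y \<in> inside ?J)" for x y
  proof -
    have xJ: "x \<notin> ?J" and yJ: "y \<notin> ?J" using x y J qK by auto
    have U: "inside ?J \<union> outside ?J = - ?J" using JO by (elim conjE)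
    have "x \<in> inside ?J \<union> outside ?J" "y \<in> inside ?J \<union> outside ?J" using xJ yJ by (simp_all only: U Compl_iff not_False_eq_True)
    then have xio: "x \<in> inside ?J \<or> x \<in> outside ?J" and yio: "y \<in> inside ?J \<or> y \<in> outside ?J"
      by (simp_all only: Un_iff)
    have "connected_component (- ?J) x y"
    proof (cases "x \<in> inside ?J")
      case True
      then have "y \<in> inside ?J" using io by simp
      then show ?thesis using True JO unfolding connected_component_def
        by (intro exI[of _ "inside ?J"]) (auto simp: inside_def)
    next
      case False
      then have "x \<in> outside ?J" "y \<in> outside ?J" using io xio yio by auto
      then show ?thesis using JO unfolding connected_component_def
        by (intro exI[of _ "outside ?J"]) (auto simp: outside_def)
    qed
    then have "connected_component (- (?J \<union> K)) x y"
      using Janiszewski[OF cJ K _ _ cc] JK cq by simp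
    then show ?thesis using JKU by simp
  qed
  show "\<exists>x y. x \<notin> K \<union> ?A \<and> y \<notin> K \<union> ?A \<and> connected_component (- K) x y \<and>
           \<not> connected_component (- (K \<union> ?A)) x y"
  proof -
    let ?p = "g (1/2)"
    have inj: "inj_on g {0..1}" using g by (simp add: arc_def)
    have pA: "?p \<in> ?A" unfolding path_image_def by auto
    have "?p \<noteq> g 0"
    proof
      assume "?p = g 0"
      then have "(1/2::real) = 0" by (rule inj_onD[OF inj]) auto
      then show False by simp
    qed
    moreover have "?p \<noteq> g 1"
    proof
      assume "?p = g 1"
      then have "(1/2::real) = 1" by (rule inj_onD[OF inj]) auto
      then show False by simp
    qed
    ultimately have pK: "?p \<notin> K" using AK pA by (auto simp: pathstart_def pathfinish_def)
    obtain r where r: "r > 0" "ball ?p r \<subseteq> - K"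
    proof -
      have "open (- K)" using K by auto
      then show ?thesis using pK that unfolding open_contains_ball by auto
    qed
    have pJ: "?p \<in> ?J" using J pA by simp
    have fi: "frontier (inside ?J) = ?J" using JO by (elim conjE)
    have fo: "frontier (outside ?J) = ?J" using JO by (elim conjE)
    have "?p \<in> closure (inside ?J)" using pJ fi unfolding frontier_def by auto
    then obtain x where x: "x \<in> inside ?J" "dist x ?p < r" using r(1) closure_approachable by blast
    have "?p \<in> closure (outside ?J)" using pJ fo unfolding frontier_def by auto
    then obtain y where y: "y \<in> outside ?J" "dist y ?p < r" using r(1) closure_approachable by blast
    have xb: "x \<in> ball ?p r" "y \<in> ball ?p r" using x y by (auto simp: dist_commute)
    have xJ: "x \<notin> ?J" using x inside_def by blast
    have yJ: "y \<notin> ?J" using y outside_def by blast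
    have xK: "x \<notin> K \<union> ?A" using xJ xb r J by auto
    have yK: "y \<notin> K \<union> ?A" using yJ xb r J by auto
    have "connected_component (- K) x y" unfolding connected_component_def
      using xb r by (intro exI[of _ "ball ?p r"]) auto
    moreover have "\<not> connected_component (- (K \<union> ?A)) x y"
    proof
      assume "connected_component (- (K \<union> ?A)) x y"
      then have cxy: "connected_component (- ?J) x y"
        by (rule connected_component_of_subset) (use J qK in auto)
      then have "connected_component_set (- ?J) y = connected_component_set (- ?J) x"
        by (intro connected_component_eq) simp
      then show False using x(1) y(1) unfolding inside_def outside_def by auto
    qed
    ultimately show ?thesis using xK yK by blast
  qed
qed



lemma pc_pieces:
  fixes P :: "complex set set"
  assumes fin: "finite P" and pc: "\<And>X. X \<in> P \<Longrightarrow> compact X \<and> path_connected X"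
  shows "compact (path_component_set (\<Union>P) a)" "compact (\<Union>P - path_component_set (\<Union>P) a)"
proof -
  let ?K = "\<Union>P" and ?C = "path_component_set (\<Union>P) a"
  have sub: "X \<subseteq> ?C" if X: "X \<in> P" "X \<inter> ?C \<noteq> {}" for X
  proof -
    obtain z where z: "z \<in> X" "z \<in> ?C" using X(2) by auto
    have "X \<subseteq> path_component_set ?K z"
      by (rule path_component_maximal) (use z pc[OF X(1)] X(1) in auto)
    also have "\<dots> = ?C" using z(2) by (rule path_component_eq)
    finally show ?thesis .
  qed
  have CK: "?C \<subseteq> ?K" by (rule path_component_subset)
  have e1: "?C = \<Union>{X\<in>P. X \<inter> ?C \<noteq> {}}"
  proof
    show "?C \<subseteq> \<Union>{X\<in>P. X \<inter> ?C \<noteq> {}}"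
    proof
      fix z assume z: "z \<in> ?C"
      then obtain X where "X \<in> P" "z \<in> X" using CK by auto
      then show "z \<in> \<Union>{X\<in>P. X \<inter> ?C \<noteq> {}}" using z by auto
    qed
    show "\<Union>{X\<in>P. X \<inter> ?C \<noteq> {}} \<subseteq> ?C" using sub by auto
  qed
  have e2: "?K - ?C = \<Union>{X\<in>P. X \<inter> ?C = {}}"
  proof
    show "?K - ?C \<subseteq> \<Union>{X\<in>P. X \<inter> ?C = {}}"
    proof
      fix z assume z: "z \<in> ?K - ?C"
      then obtain X where X: "X \<in> P" "z \<in> X" by auto
      have "X \<inter> ?C = {}" using sub[OF X(1)] X(2) z by auto
      then show "z \<in> \<Union>{X\<in>P. X \<inter> ?C = {}}" using X by auto
    qed
    show "\<Union>{X\<in>P. X \<inter> ?C = {}} \<subseteq> ?K - ?C" by auto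
  qed
  have "compact (\<Union>{X\<in>P. X \<inter> ?C \<noteq> {}})" using fin pc by (intro compact_Union) auto
  then show "compact ?C" using e1 by simp
  have "compact (\<Union>{X\<in>P. X \<inter> ?C = {}})" using fin pc by (intro compact_Union) auto
  then show "compact (?K - ?C)" using e2 by simp
qed

lemma card_factor:
  assumes fin: "finite V" and fh: "\<And>u w. u \<in> V \<Longrightarrow> w \<in> V \<Longrightarrow> f u = f w \<Longrightarrow> h u = h w"
  shows "card (h ` V) \<le> card (f ` V)"
    "(\<exists>u\<in>V. \<exists>w\<in>V. f u \<noteq> f w \<and> h u = h w) \<Longrightarrow> card (h ` V) < card (f ` V)"
proof -
  define g where "g y = h (SOME v. v \<in> V \<and> f v = y)" for y
  have gf: "g (f v) = h v" if "v \<in> V" for v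
  proof -
    have "\<exists>v'. v' \<in> V \<and> f v' = f v" using that by auto
    then have s: "(SOME v'. v' \<in> V \<and> f v' = f v) \<in> V \<and> f (SOME v'. v' \<in> V \<and> f v' = f v) = f v"
      by (rule someI_ex)
    have "h (SOME v'. v' \<in> V \<and> f v' = f v) = h v"
      using fh[of "SOME v'. v' \<in> V \<and> f v' = f v" v] s that by blast
    then show ?thesis unfolding g_def .
  qed
  have hV: "h ` V = g ` (f ` V)"
  proof
    show "h ` V \<subseteq> g ` f ` V"
    proof
      fix y assume "y \<in> h ` V"
      then obtain v where v: "v \<in> V" "y = h v" by auto
      then have "y = g (f v)" using gf by simp
      then show "y \<in> g ` f ` V" using v(1) by auto
    qed
    show "g ` f ` V \<subseteq> h ` V" using gf by auto
  qed
  show "card (h ` V) \<le> card (f ` V)" unfolding hV using fin by (simp add: card_image_le)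
  assume "\<exists>u\<in>V. \<exists>w\<in>V. f u \<noteq> f w \<and> h u = h w"
  then obtain u w where uw: "u \<in> V" "w \<in> V" "f u \<noteq> f w" "h u = h w" by auto
  have "\<not> inj_on g (f ` V)"
  proof
    assume "inj_on g (f ` V)"
    moreover have "g (f u) = g (f w)" using gf uw by simp
    ultimately have "f u = f w" using uw by (auto dest: inj_onD)
    then show False using uw by simp
  qed
  then have "card (g ` f ` V) \<noteq> card (f ` V)" using fin inj_on_iff_eq_card by blast
  moreover have "card (g ` f ` V) \<le> card (f ` V)" using fin by (simp add: card_image_le)
  ultimately show "card (h ` V) < card (f ` V)" unfolding hV by simp
qed

lemma pc_finite_sing:
  fixes F :: "complex set"
  assumes "finite F" "x \<in> F"
  shows "path_component_set F x = {x}"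
proof -
  have c: "connected (path_component_set F x)"
    by (simp add: path_connected_imp_connected path_connected_path_component)
  have f: "finite (path_component_set F x)"
    using assms(1) path_component_subset finite_subset by blast
  have "x \<in> path_component_set F x" using assms(2) by (simp add: path_component_refl)
  moreover have "path_component_set F x = {} \<or> (\<exists>a. path_component_set F x = {a})"
    using connected_finite_iff_sing[OF c] f by simp
  ultimately obtain a where a: "path_component_set F x = {a}" by auto
  then show ?thesis using \<open>x \<in> path_component_set F x\<close> by auto
qed

lemma comp_finite_compl:
  fixes F :: "complex set"
  assumes "finite F"
  shows "components (- F) = {- F}"
proof -
  have "connected (- F)"
    using assms by (intro path_connected_imp_connected path_connected_complement_countable)
      (auto intro: countable_finite)
  moreover have "- F \<noteq> {}"
  proof
    assume "- F = {}"
    then have "F = UNIV" by auto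
    then show False using assms infinite_UNIV_char_0[where 'a=complex] by simp
  qed
  ultimately show ?thesis by (simp add: components_eq_sing_iff)
qed



lemma rho_step:
  fixes pos :: "'a \<Rightarrow> complex"
  assumes fin: "finite V" and VK: "pos ` V \<subseteq> K" and KK': "K \<subseteq> K'"
  shows "card ((\<lambda>v. path_component_set K' (pos v)) ` V) \<le> card ((\<lambda>v. path_component_set K (pos v)) ` V)"
    "(\<exists>u\<in>V. \<exists>w\<in>V. \<not> path_component K (pos u) (pos w) \<and> path_component K' (pos u) (pos w))
     \<Longrightarrow> card ((\<lambda>v. path_component_set K' (pos v)) ` V) < card ((\<lambda>v. path_component_set K (pos v)) ` V)"
proof -
  have fh: "path_component_set K' (pos u) = path_component_set K' (pos w)"
    if uw: "u \<in> V" "w \<in> V" "path_component_set K (pos u) = path_component_set K (pos w)" for u w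
  proof -
    have "pos w \<in> K" using VK uw(2) by auto
    then have "pos w \<in> path_component_set K (pos u)" by (subst uw(3)) (simp add: path_component_refl)
    then have "path_component K (pos u) (pos w)" by simp
    then have "path_component K' (pos u) (pos w)" using KK' by (rule path_component_of_subset[rotated])
    then have "pos w \<in> path_component_set K' (pos u)" by simp
    then show ?thesis by (rule path_component_eq[symmetric])
  qed
  show "card ((\<lambda>v. path_component_set K' (pos v)) ` V) \<le> card ((\<lambda>v. path_component_set K (pos v)) ` V)"
    by (rule card_factor(1)[OF fin]) (rule fh)
  assume "\<exists>u\<in>V. \<exists>w\<in>V. \<not> path_component K (pos u) (pos w) \<and> path_component K' (pos u) (pos w)"
  then obtain u w where uw: "u \<in> V" "w \<in> V" "\<not> path_component K (pos u) (pos w)" "path_component K' (pos u) (pos w)"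
    by auto
  have "path_component_set K (pos u) \<noteq> path_component_set K (pos w)"
  proof
    assume eq: "path_component_set K (pos u) = path_component_set K (pos w)"
    have "pos w \<in> K" using VK uw(2) by auto
    then have "pos w \<in> path_component_set K (pos u)" by (subst eq) (simp add: path_component_refl)
    then have "path_component K (pos u) (pos w)" by simp
    then show False using uw(3) by simp
  qed
  moreover have "path_component_set K' (pos u) = path_component_set K' (pos w)"
  proof -
    have "pos w \<in> path_component_set K' (pos u)" using uw(4) by simp
    then show ?thesis by (rule path_component_eq[symmetric])
  qed
  ultimately have ex: "\<exists>u\<in>V. \<exists>w\<in>V. path_component_set K (pos u) \<noteq> path_component_set K (pos w) \<and>
      path_component_set K' (pos u) = path_component_set K' (pos w)"
    using uw(1,2) by (intro bexI[of _ u] bexI[of _ w] conjI)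
  show "card ((\<lambda>v. path_component_set K' (pos v)) ` V) < card ((\<lambda>v. path_component_set K (pos v)) ` V)"
    by (rule card_factor(2)[OF fin _ ex]) (rule fh)
qed

definition KK :: "'a set \<Rightarrow> ('a \<Rightarrow> complex) \<Rightarrow> ('a set \<Rightarrow> real \<Rightarrow> complex) \<Rightarrow> 'a set list \<Rightarrow> complex set" where
  "KK V pos \<gamma> ds = pos ` V \<union> (\<Union>e\<in>set ds. path_image (\<gamma> e))"

definition rho :: "'a set \<Rightarrow> ('a \<Rightarrow> complex) \<Rightarrow> complex set \<Rightarrow> nat" where
  "rho V pos K = card ((\<lambda>v. path_component_set K (pos v)) ` V)"

lemma induct_main:
  fixes V :: "'a set" and E :: "'a set set"
    and pos :: "'a \<Rightarrow> complex" and \<gamma> :: "'a set \<Rightarrow> real \<Rightarrow> complex"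
  assumes sg: "simple_graph V E" and emb: "plane_embedding V E pos \<gamma>"
  shows "set ds \<subseteq> E \<Longrightarrow> distinct ds \<Longrightarrow> finite (components (- KK V pos \<gamma> ds)) \<and>
     rho V pos (KK V pos \<gamma> ds) + 1 + length ds \<le> card (components (- KK V pos \<gamma> ds)) + card V"
proof (induction ds rule: rev_induct)
  case Nil
  have finV: "finite V" using sg by (simp add: simple_graph_def)
  have injp: "inj_on pos V" using emb by (simp add: plane_embedding_def)
  have K0: "KK V pos \<gamma> [] = pos ` V" by (simp add: KK_def)
  have fpV: "finite (pos ` V)" using finV by simp
  have c: "components (- KK V pos \<gamma> []) = {- pos ` V}" unfolding K0 by (rule comp_finite_compl[OF fpV])
  have "(\<lambda>v. path_component_set (pos ` V) (pos v)) ` V = (\<lambda>v. {pos v}) ` V"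
    using pc_finite_sing[OF fpV] by (intro image_cong) auto
  moreover have "inj_on (\<lambda>v. {pos v}) V" using injp by (auto simp: inj_on_def)
  ultimately have "rho V pos (KK V pos \<gamma> []) = card V" unfolding rho_def K0
    by (simp add: card_image)
  then show ?case using c by simp
next
  case (snoc e ds)
  have finV: "finite V" using sg by (simp add: simple_graph_def)
  have eE: "e \<in> E" and dsE: "set ds \<subseteq> E" using snoc.prems by auto
  have enot: "e \<notin> set ds" and dds: "distinct ds" using snoc.prems by auto
  note IH = snoc.IH[OF dsE dds]
  define K where "K = KK V pos \<gamma> ds"
  define g where "g = \<gamma> e"
  define A where "A = path_image g"
  have K': "KK V pos \<gamma> (ds @ [e]) = K \<union> A" unfolding K_def A_def g_def KK_def by auto
  have g: "arc g" and gse: "{pathstart g, pathfinish g} = pos ` e" and gV: "A \<inter> pos ` V = pos ` e"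
    using emb eE unfolding plane_embedding_def g_def A_def by auto
  obtain u w where uw: "u \<noteq> w" "e = {u, w}" "u \<in> V" "w \<in> V"
    using sg eE unfolding simple_graph_def by blast
  let ?a = "pathstart g" and ?b = "pathfinish g"
  have eV: "pos ` e \<subseteq> pos ` V" using uw by auto
  obtain ua where ua: "ua \<in> V" "pos ua = ?a" using gse eV by (metis imageE insertI1 subsetD)
  obtain ub where ub: "ub \<in> V" "pos ub = ?b" using gse eV by (metis imageE insert_commute insertI1 subsetD)
  have AK: "A \<inter> K \<subseteq> {?a, ?b}"
  proof
    fix z assume z: "z \<in> A \<inter> K"
    then have "z \<in> pos ` V \<or> (\<exists>e'\<in>set ds. z \<in> path_image (\<gamma> e'))" unfolding K_def KK_def by auto
    then have "z \<in> pos ` e"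
    proof
      assume "z \<in> pos ` V" then show ?thesis using gV z by auto
    next
      assume "\<exists>e'\<in>set ds. z \<in> path_image (\<gamma> e')"
      then obtain e' where e': "e' \<in> set ds" "z \<in> path_image (\<gamma> e')" by auto
      have "e \<noteq> e'" using enot e'(1) by auto
      moreover have "e' \<in> E" using dsE e'(1) by auto
      ultimately have "path_image (\<gamma> e) \<inter> path_image (\<gamma> e') \<subseteq> pos ` (e \<inter> e')"
        using emb eE unfolding plane_embedding_def by blast
      then show ?thesis using z e'(2) unfolding A_def g_def by auto
    qed
    then show "z \<in> {?a, ?b}" using gse by simp
  qed
  define P where "P = (\<lambda>v. {pos v}) ` V \<union> (\<lambda>e. path_image (\<gamma> e)) ` set ds"
  have KP: "K = \<Union>P" unfolding K_def KK_def P_def by auto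
  have finP: "finite P" unfolding P_def using finV by simp
  have arcs: "arc (\<gamma> e')" if "e' \<in> set ds" for e'
    using emb dsE that unfolding plane_embedding_def by auto
  have Pc: "compact X \<and> path_connected X" if "X \<in> P" for X
    using that arcs unfolding P_def
    by (auto intro: compact_path_image path_connected_path_image arc_imp_path)
  have cK: "compact K" unfolding KP using finP Pc by (intro compact_Union) auto
  then have clK: "closed K" by (rule compact_imp_closed)
  have Aint: "interior A = {}" unfolding A_def by (rule arc_image_interior_empty[OF g])
  have finK: "finite (components (- K))" using IH unfolding K_def by simp
  have VK: "pos ` V \<subseteq> K" unfolding K_def KK_def by auto
  have aK: "?a \<in> K" using ua VK by auto
  have KA: "K \<subseteq> K \<union> A" by auto
  have VKA: "pos ` V \<subseteq> K \<union> A" using VK by auto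
  show ?case
  proof (cases "path_component K ?a ?b")
    case True
    have ab: "?a \<noteq> ?b" using arc_distinct_ends[OF g] by simp
    obtain p where p: "path p" "path_image p \<subseteq> K" "pathstart p = ?a" "pathfinish p = ?b"
      using True unfolding path_component_def by blast
    obtain q where q: "arc q" "path_image q \<subseteq> path_image p" "pathstart q = ?a" "pathfinish q = ?b"
      using path_contains_arc[OF p(1) p(3) p(4) ab] by blast
    have qK: "path_image q \<subseteq> K" using q(2) p(2) by auto
    note sc = sep_cycle[OF clK g q(1) qK q(3) q(4) AK[unfolded A_def]]
    let ?Q = "\<lambda>x. x \<in> inside (path_image (g +++ reversepath q))"
    have sep1: "\<And>x y. x \<notin> K \<union> A \<Longrightarrow> y \<notin> K \<union> A \<Longrightarrow> connected_component (- K) x y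
           \<Longrightarrow> ?Q x = ?Q y \<Longrightarrow> connected_component (- (K \<union> A)) x y"
      unfolding A_def by (rule sc(1))
    have ex: "\<exists>x y. x \<notin> K \<union> A \<and> y \<notin> K \<union> A \<and> connected_component (- K) x y \<and>
           \<not> connected_component (- (K \<union> A)) x y"
      unfolding A_def by (rule sc(2))
    have st1: "finite (components (- (K \<union> A)))"
      by (rule step_count(1)[OF clK Aint finK sep1])
    have st2: "card (components (- K)) < card (components (- (K \<union> A)))"
      by (rule step_count(3)[OF clK Aint finK sep1 ex])
    have r: "rho V pos (K \<union> A) \<le> rho V pos K"
      unfolding rho_def by (rule rho_step(1)[OF finV VK KA])
    show ?thesis using IH st1 st2 r unfolding K' K_def[symmetric] by simp
  next
    case False
    define K1 where "K1 = path_component_set K ?a"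
    define K2 where "K2 = K - K1"
    have cK1: "compact K1" unfolding K1_def KP by (rule pc_pieces(1)[OF finP Pc])
    have cK2: "compact K2" unfolding K2_def K1_def KP by (rule pc_pieces(2)[OF finP Pc])
    have KU: "K = K1 \<union> K2" unfolding K2_def K1_def using path_component_subset by auto
    have d: "K1 \<inter> K2 = {}" unfolding K2_def by auto
    have b1: "?b \<notin> K1" unfolding K1_def using False by simp
    have a2: "?a \<notin> K2" unfolding K2_def K1_def using aK by (simp add: path_component_refl)
    have AK': "path_image g \<inter> (K1 \<union> K2) \<subseteq> {?a, ?b}" using AK KU unfolding A_def by simp
    have sep: "connected_component (- (K \<union> A)) x y"
      if "x \<notin> K \<union> A" "y \<notin> K \<union> A" "connected_component (- K) x y" "True = True" for x y
      using sep_noncycle[OF cK1 compact_imp_closed[OF cK2] d g AK' b1 a2, of x y] that KU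
      unfolding A_def by simp
    have st1: "finite (components (- (K \<union> A)))"
      by (rule step_count(1)[OF clK Aint finK sep])
    have st2: "card (components (- K)) \<le> card (components (- (K \<union> A)))"
      by (rule step_count(2)[OF clK Aint finK sep])
    have pcA: "path_component (K \<union> A) ?a ?b"
      unfolding path_component_def A_def using g arc_imp_path by (intro exI[of _ g]) auto
    have "rho V pos (K \<union> A) < rho V pos K"
      unfolding rho_def
    proof (rule rho_step(2)[OF finV VK KA])
      show "\<exists>u\<in>V. \<exists>w\<in>V. \<not> path_component K (pos u) (pos w) \<and> path_component (K \<union> A) (pos u) (pos w)"
        using ua ub False pcA by (intro bexI[of _ ua] bexI[of _ ub] conjI) auto
    qed
    then show ?thesis using IH st1 st2 unfolding K' K_def[symmetric] by simp
  qed
qed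



lemma sg_edge: "simple_graph V E \<Longrightarrow> e \<in> E \<Longrightarrow> \<exists>u w. u \<noteq> w \<and> e = {u, w} \<and> u \<in> V \<and> w \<in> V"
  unfolding simple_graph_def by auto

lemma edges_bound:
  fixes V :: "'a set" and E :: "'a set set"
  assumes sg: "simple_graph V E" and pm: "perfect_matching V E M"
    and d1: "\<forall>v\<in>V. degree E v \<noteq> 1"
    and d2: "\<forall>u\<in>V. \<forall>v\<in>V. adjacent E u v \<longrightarrow> \<not> (degree E u = 2 \<and> degree E v = 2)"
  shows "5 * card V \<le> 4 * card E"
proof -
  have finV: "finite V" using sg by (simp add: simple_graph_def)
  have EP: "E \<subseteq> Pow V"
  proof
    fix e assume "e \<in> E"
    then obtain u w where "u \<noteq> w" "e = {u, w}" "u \<in> V" "w \<in> V" using sg_edge[OF sg] by meson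
    then show "e \<in> Pow V" by auto
  qed
  have finE: "finite E" by (rule finite_subset[OF EP]) (simp add: finV)
  have ecard: "card {v\<in>V. v \<in> e} = 2" if eE: "e \<in> E" for e
  proof -
    obtain u w where "u \<noteq> w" "e = {u, w}" "u \<in> V" "w \<in> V" using sg_edge[OF sg eE] by (elim exE conjE)
    then have "{v\<in>V. v \<in> e} = {u, w}" by auto
    then show ?thesis using \<open>u \<noteq> w\<close> by simp
  qed
  have degsum: "(\<Sum>v\<in>V. degree E v) = 2 * card E"
  proof -
    have "(\<Sum>v\<in>V. degree E v) = (\<Sum>v\<in>V. \<Sum>e\<in>E. if v \<in> e then 1 else 0)"
    proof (rule sum.cong[OF refl])
      fix v assume "v \<in> V"
      have "degree E v = (\<Sum>e\<in>{e\<in>E. v \<in> e}. 1)" by (simp add: degree_def)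
      also have "\<dots> = (\<Sum>e\<in>E. if v \<in> e then 1 else 0)" using finE by (rule sum.inter_filter)
      finally show "degree E v = (\<Sum>e\<in>E. if v \<in> e then 1 else 0)" .
    qed
    also have "\<dots> = (\<Sum>e\<in>E. \<Sum>v\<in>V. if v \<in> e then 1 else 0)" by (rule sum.swap)
    also have "\<dots> = (\<Sum>e\<in>E. 2)"
    proof (rule sum.cong[OF refl])
      fix e assume e: "e \<in> E"
      have "(\<Sum>v\<in>V. if v \<in> e then 1 else 0) = (\<Sum>v\<in>{v\<in>V. v \<in> e}. (1::nat))"
        using finV by (rule sum.inter_filter[symmetric])
      also have "\<dots> = 2" using ecard[OF e] by simp
      finally show "(\<Sum>v\<in>V. if v \<in> e then 1 else 0) = (2::nat)" .
    qed
    finally show ?thesis by simp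
  qed
  have MU: "\<exists>!e. e \<in> M \<and> v \<in> e" if "v \<in> V" for v using pm that unfolding perfect_matching_def by blast
  have ME: "M \<subseteq> E" using pm unfolding perfect_matching_def by blast
  have deg2: "degree E v \<ge> 2" if v: "v \<in> V" for v
  proof -
    obtain e where e: "e \<in> M" "v \<in> e" using MU[OF v] by blast
    then have "e \<in> {e\<in>E. v \<in> e}" using ME by auto
    moreover have "finite {e\<in>E. v \<in> e}" using finE by simp
    ultimately have "card {e\<in>E. v \<in> e} \<noteq> 0" by auto
    then show ?thesis using d1 v unfolding degree_def by (metis One_nat_def less_2_cases not_le)
  qed
  define S where "S = {v\<in>V. degree E v = 2}"
  have SV: "S \<subseteq> V" unfolding S_def by auto
  have partner: "\<exists>w. w \<in> V - S \<and> {v, w} \<in> M" if v: "v \<in> S" for v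
  proof -
    have vV: "v \<in> V" using v SV by auto
    obtain e where e: "e \<in> M" "v \<in> e" using MU[OF vV] by blast
    have eE: "e \<in> E" using e(1) ME by auto
    obtain x y where xy: "x \<noteq> y" "e = {x, y}" "x \<in> V" "y \<in> V" using sg_edge[OF sg eE] by (elim exE conjE)
    obtain w where w: "w \<in> V" "e = {v, w}" using xy e(2) by (metis insert_commute insert_iff singleton_iff)
    have "adjacent E v w" using w e(1) ME unfolding adjacent_def by auto
    then have "\<not> (degree E v = 2 \<and> degree E w = 2)" using d2 vV w(1) by blast
    then have "w \<notin> S" using v unfolding S_def by auto
    then show ?thesis using w e(1) by auto
  qed
  define \<mu> where "\<mu> v = (SOME w. w \<in> V - S \<and> {v, w} \<in> M)" for v
  have mu: "\<mu> v \<in> V - S \<and> {v, \<mu> v} \<in> M" if "v \<in> S" for v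
    unfolding \<mu>_def using partner[OF that] by (rule someI_ex)
  have inj: "inj_on \<mu> S"
  proof (rule inj_onI)
    fix v v' assume v: "v \<in> S" and v': "v' \<in> S" and eq: "\<mu> v = \<mu> v'"
    let ?w = "\<mu> v"
    have wV: "?w \<in> V" using mu[OF v] by auto
    have e1: "{v, ?w} \<in> M" using mu[OF v] by auto
    have e2: "{v', ?w} \<in> M" using mu[OF v'] eq by auto
    have "{v, ?w} = {v', ?w}" using MU[OF wV] e1 e2 by auto
    moreover have "v \<noteq> ?w" using mu[OF v] v by auto
    ultimately show "v = v'" by (metis doubleton_eq_iff)
  qed
  have "card S \<le> card (V - S)"
    by (rule card_inj_on_le[OF inj]) (use mu finV in auto)
  moreover have cV: "card V = card S + card (V - S)"
    using finV SV by (metis card_Diff_subset card_mono add_diff_inverse_nat finite_subset not_less)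
  moreover have "(\<Sum>v\<in>V. degree E v) \<ge> 2 * card S + 3 * card (V - S)"
  proof -
    have "(\<Sum>v\<in>V. degree E v) = (\<Sum>v\<in>V - S. degree E v) + (\<Sum>v\<in>S. degree E v)"
      using SV finV by (rule sum.subset_diff)
    moreover have "(\<Sum>v\<in>S. degree E v) = 2 * card S" unfolding S_def by simp
    moreover have "(\<Sum>v\<in>V - S. degree E v) \<ge> (\<Sum>v\<in>V - S. 3)"
    proof (rule sum_mono)
      fix v assume "v \<in> V - S"
      then show "3 \<le> degree E v" using deg2[of v] unfolding S_def by auto
    qed
    ultimately show ?thesis by simp
  qed
  ultimately show ?thesis using degsum by linarith
qed



theorem lemma7:
  fixes V :: "'a set" and E :: "'a set set"
    and pos :: "'a \<Rightarrow> complex" and \<gamma> :: "'a set \<Rightarrow> real \<Rightarrow> complex"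
  assumes "simple_graph V E"
    and "V \<noteq> {}"
    and "plane_embedding V E pos \<gamma>"
    and "\<exists>M. perfect_matching V E M"
    and "\<forall>v\<in>V. degree E v \<noteq> 1"
    and "\<forall>u\<in>V. \<forall>v\<in>V. adjacent E u v \<longrightarrow> \<not> (degree E u = 2 \<and> degree E v = 2)"
  shows "real (card (faces V E pos \<gamma>)) \<ge> real (card V) / 4 + 2"
proof -
  have finV: "finite V" using assms(1) by (simp add: simple_graph_def)
  obtain M where pm: "perfect_matching V E M" using assms(4) by blast
  have eb: "5 * card V \<le> 4 * card E" by (rule edges_bound[OF assms(1) pm assms(5) assms(6)])
  have EP: "E \<subseteq> Pow V"
  proof
    fix e assume "e \<in> E"
    then obtain u w where "u \<noteq> w" "e = {u, w}" "u \<in> V" "w \<in> V" using sg_edge[OF assms(1)] by meson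
    then show "e \<in> Pow V" by auto
  qed
  have finE: "finite E" by (rule finite_subset[OF EP]) (simp add: finV)
  obtain es where es: "set es = E" "distinct es" using finite_distinct_list[OF finE] by blast
  have main: "finite (components (- KK V pos \<gamma> es)) \<and>
     rho V pos (KK V pos \<gamma> es) + 1 + length es \<le> card (components (- KK V pos \<gamma> es)) + card V"
    by (rule induct_main[OF assms(1) assms(3)]) (use es in auto)
  have KKe: "KK V pos \<gamma> es = embedding_set V E pos \<gamma>"
    unfolding KK_def embedding_set_def es(1) ..
  have len: "length es = card E" using distinct_card[OF es(2)] es(1) by simp
  have r1: "rho V pos (KK V pos \<gamma> es) \<ge> 1"
  proof -
    have "finite ((\<lambda>v. path_component_set (KK V pos \<gamma> es) (pos v)) ` V)" using finV by simp
    moreover have "(\<lambda>v. path_component_set (KK V pos \<gamma> es) (pos v)) ` V \<noteq> {}" using assms(2) by simp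
    ultimately show ?thesis unfolding rho_def by (simp add: Suc_le_eq card_gt_0_iff)
  qed
  let ?S = "embedding_set V E pos \<gamma>"
  let ?X = "components (- ?S)"
  have arcs: "arc (\<gamma> e)" if "e \<in> E" for e
    using assms(3) that unfolding plane_embedding_def by auto
  have cS: "compact ?S"
  proof -
    have "compact (pos ` V)" using finV by (simp add: finite_imp_compact)
    moreover have "compact (\<Union>e\<in>E. path_image (\<gamma> e))"
      using finE arcs by (intro compact_UN) (auto intro: compact_path_image arc_imp_path)
    ultimately show ?thesis unfolding embedding_set_def by (rule compact_Un)
  qed
  have oX: "open D" if "D \<in> ?X" for D
    using open_components[OF _ that] compact_imp_closed[OF cS] by auto
  have inj: "inj_on closure ?X"
  proof (rule inj_onI)
    fix D D' assume D: "D \<in> ?X" and D': "D' \<in> ?X" and eq: "closure D = closure D'"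
    show "D = D'"
    proof (rule ccontr)
      assume ne: "D \<noteq> D'"
      then have "D \<inter> D' = {}" using components_nonoverlap[OF D D'] by simp
      then have "D \<inter> closure D' = {}" using open_Int_closure_eq_empty[OF oX[OF D]] by simp
      moreover have "D \<subseteq> closure D'" using eq closure_subset[of D] by simp
      ultimately have "D = {}" by auto
      then show False using in_components_nonempty[OF D] by simp
    qed
  qed
  have F: "card (faces V E pos \<gamma>) = card ?X"
    unfolding faces_def by (rule card_image[OF inj])
  have "rho V pos (KK V pos \<gamma> es) + 1 + card E \<le> card ?X + card V"
    using main len KKe by simp
  then have "card V + 8 \<le> 4 * card (faces V E pos \<gamma>)" using r1 eb F by linarith
  then have "real (card V + 8) \<le> real (4 * card (faces V E pos \<gamma>))" by (simp only: of_nat_le_iff)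
  then show ?thesis by simp
qed

end
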